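(* Let $\mathcal{P}_1$ be the set of $s\in\mathcal{A}^*$ with $s_{|s|-1}<s_{|s|}=\mathsf{asc}(s)$. For every $n$ there is a bijection $\phi_1:\mathcal{A}_n\cap\mathcal{P}_1\to\mathcal{A}_{n-1}\cap\mathcal{A}^*$ such that for all $s$: $\mathsf{asc}(s)=\mathsf{asc}(\phi_1(s))+1$, $\mathsf{rmin}(s)=\mathsf{rmin}(\phi_1(s))+1$, and $\mathsf{rep},\mathsf{zero},\mathsf{max},\mathsf{ealm},\mathsf{rpos}$ take the same values on $s$ and $\phi_1(s)$.
   Context: For a sequence $s$, $\mathsf{asc}(s)=|\{i:s_i<s_{i+1}\}|$. An ascent sequence is a sequence $s=(s_1,\dots,s_n)$ of non-negative integers with $s_1=0$, $s_i\le\mathsf{asc}(s_1,\dots,s_{i-1})+1$ for $i\ge2$; $\mathcal{A}_n$ is the set of those of length $n$, $|s|$ the length; $\mathcal{A}^*$ is the set of all ascent sequences except those of the form $(0,1,\dots,|s|-1)$. $\mathsf{rep}(s)=|s|-|\{s_i\}|$; $\mathsf{zero}(s)=|\{i:s_i=0\}|$; $\mathsf{max}(s)=|\{i:s_i=i-1\}|$; $\mathsf{ealm}(s)=s_{\mathsf{max}(s)+1}$ if $\mathsf{max}(s)\ne|s|$, else $0$. A right-to-left minimum is an entry $s_i$ with $s_i<s_j$ for all $j>i$; $\mathsf{rmin}(s)$ is their number; they are indexed $0,\dots,\mathsf{rmin}(s)-1$ from left to right, with values $\mathrm{Rmin}(s)_m$ and positions $\mathrm{Prm}(s)_m$. $\mathsf{rpos}(s)$: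 $0$ if $\mathsf{rmin}(s)=|s|$; otherwise the maximal $m$ such that the value $\mathrm{Rmin}(s)_m$ occurs at least twice after position $\mathrm{Prm}(s)_{m-1}$ (for $m=0$: at least twice in $s$), and $0$ if none. *)

theory Defs
  imports Main
begin

text \<open>Sequences are lists of naturals; list index i (0-based) corresponds to paper index i+1.\<close>

definition asc :: "nat list \<Rightarrow> nat" where
  "asc s = card {i. Suc i < length s \<and> s ! i < s ! Suc i}"

definition is_ascent :: "nat list \<Rightarrow> bool" where
  "is_ascent s \<longleftrightarrow> s \<noteq> [] \<and> s ! 0 = 0 \<and>
     (\<forall>i. 1 \<le> i \<and> i < length s \<longrightarrow> s ! i \<le> asc (take i s) + 1)"

definition ascA :: "nat \<Rightarrow> nat list set" where
  "ascA n = {s. is_ascent s \<and> length s = n}"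

definition ascAstar :: "nat list set" where
  "ascAstar = {s. is_ascent s \<and> s \<noteq> [0..<length s]}"

definition st_rep :: "nat list \<Rightarrow> nat" where
  "st_rep s = length s - card (set s)"

definition st_zero :: "nat list \<Rightarrow> nat" where
  "st_zero s = card {i. i < length s \<and> s ! i = 0}"

text \<open>Paper: s_i = i - 1 (1-based), i.e. s ! i = i (0-based).\<close>
definition st_max :: "nat list \<Rightarrow> nat" where
  "st_max s = card {i. i < length s \<and> s ! i = i}"

text \<open>Paper: s_{max(s)+1} (1-based) = s ! max(s) (0-based).\<close>
definition st_ealm :: "nat list \<Rightarrow> nat" where
  "st_ealm s = (if st_max s \<noteq> length s then s ! st_max s else 0)"

definition Prm :: "nat list \<Rightarrow> nat list" where
  "Prm s = filter (\<lambda>i. \<forall>j. i < j \<and> j < length s \<longrightarrow> s ! i < s ! j) [0..<length s]"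

definition st_rmin :: "nat list \<Rightarrow> nat" where
  "st_rmin s = length (Prm s)"

definition Rmin :: "nat list \<Rightarrow> nat \<Rightarrow> nat" where
  "Rmin s m = s ! (Prm s ! m)"

definition rpos_ok :: "nat list \<Rightarrow> nat \<Rightarrow> bool" where
  "rpos_ok s m \<longleftrightarrow> m < st_rmin s \<and>
     (if m = 0 then 2 \<le> card {j. j < length s \<and> s ! j = Rmin s 0}
      else 2 \<le> card {j. Prm s ! (m - 1) < j \<and> j < length s \<and> s ! j = Rmin s m})"

definition st_rpos :: "nat list \<Rightarrow> nat" where
  "st_rpos s = (if st_rmin s = length s then 0
               else if \<exists>m. rpos_ok s m then Max {m. rpos_ok s m} else 0)"

definition ascP1 :: "nat list set" where
  "ascP1 = {s. s \<in> ascAstar \<and> 2 \<le> length s \<and>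
              s ! (length s - 2) < s ! (length s - 1) \<and> s ! (length s - 1) = asc s}"

end

theory Submission imports Defs begin

lemma asc_append:
  assumes "t \<noteq> []"
  shows "asc (t @ [x]) = asc t + (if last t < x then 1 else 0)"
proof -
  let ?S = "{i. Suc i < length t \<and> t ! i < t ! Suc i}"
  have fin: "finite ?S" by (rule finite_subset[of _ "{..<length t}"]) auto
  have eq: "{i. Suc i < length (t@[x]) \<and> (t@[x]) ! i < (t@[x]) ! Suc i}
        = ?S \<union> (if last t < x then {length t - 1} else {})"
  proof (rule set_eqI)
    fix i
    have L: "last t = t ! (length t - 1)" using assms by (simp add: last_conv_nth)
    consider "Suc i < length t" | "Suc i = length t" | "Suc i > length t" by linarith
    then show "i \<in> {i. Suc i < length (t@[x]) \<and> (t@[x]) ! i < (t@[x]) ! Suc i}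
        \<longleftrightarrow> i \<in> ?S \<union> (if last t < x then {length t - 1} else {})"
    proof cases
      case 1 then show ?thesis by (auto simp: nth_append)
    next
      case 2 then have "i = length t - 1" by simp
      then show ?thesis using 2 L by (auto simp: nth_append)
    next
      case 3 then show ?thesis using assms by (cases t) auto
    qed
  qed
  have nin: "length t - 1 \<notin> ?S" by auto
  show ?thesis unfolding asc_def eq using fin nin by auto
qed

lemma asc_take_le: "asc (take k t) \<le> asc t"
  unfolding asc_def
  by (rule card_mono) (auto intro: finite_subset[of _ "{..<length t}"])

lemma asc_le_len: "asc t \<le> length t - 1"
proof -
  have "asc t \<le> card {..<length t - 1}"
    unfolding asc_def by (rule card_mono) auto
  thus ?thesis by simp
qed

lemma take_Suc_snoc: "i < length t \<Longrightarrow> take (Suc i) t = take i t @ [t ! i]"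
  by (simp add: take_Suc_conv_app_nth)

lemma entry_le_asc:
  assumes "is_ascent t" "i < length t"
  shows "t ! i \<le> asc (take (Suc i) t)"
  using assms(2)
proof (induction i)
  case 0
  then show ?case using assms(1) by (simp add: is_ascent_def)
next
  case (Suc i)
  have b: "t ! Suc i \<le> asc (take (Suc i) t) + 1"
    using assms(1) Suc.prems unfolding is_ascent_def by auto
  have ih: "t ! i \<le> asc (take (Suc i) t)" using Suc by simp
  have ne: "take (Suc i) t \<noteq> []" using Suc.prems by (cases t) auto
  have lst: "last (take (Suc i) t) = t ! i" using Suc.prems
    by (simp add: take_Suc_snoc)
  have tk: "take (Suc (Suc i)) t = take (Suc i) t @ [t ! Suc i]"
    using Suc.prems take_Suc_snoc by blast
  show ?case
  proof (cases "t ! Suc i = asc (take (Suc i) t) + 1")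
    case True
    then have "last (take (Suc i) t) < t ! Suc i" using ih lst by simp
    then show ?thesis unfolding tk using asc_append[OF ne] True by simp
  next
    case False
    then show ?thesis unfolding tk using asc_append[OF ne, of "t ! Suc i"] b by auto
  qed
qed

lemma set_le_asc:
  assumes "is_ascent t" "x \<in> set t" shows "x \<le> asc t"
proof -
  obtain i where "i < length t" "x = t ! i" using assms(2) by (auto simp: in_set_conv_nth)
  thus ?thesis using entry_le_asc[OF assms(1)] asc_take_le le_trans by metis
qed

lemma is_ascent_snoc:
  assumes "t \<noteq> []"
  shows "is_ascent (t @ [x]) \<longleftrightarrow> is_ascent t \<and> x \<le> asc t + 1"
proof -
  have 1: "(t@[x]) ! i = t ! i" "take i (t @ [x]) = take i t" if "i < length t" for i
    using that by (auto simp: nth_append)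
  have 2: "(t@[x]) ! length t = x" "take (length t) (t @ [x]) = t" by auto
  have 0: "(t@[x]) ! 0 = t ! 0" using assms 1 by auto
  show ?thesis
  proof
    assume h: "is_ascent (t @ [x])"
    have "is_ascent t" unfolding is_ascent_def
    proof (intro conjI allI impI)
      show "t ! 0 = 0" using h 0 unfolding is_ascent_def by simp
      fix i assume "1 \<le> i \<and> i < length t"
      then show "t ! i \<le> asc (take i t) + 1" using h 1[of i] unfolding is_ascent_def by auto
    qed (use assms in auto)
    moreover have "x \<le> asc t + 1"
    proof (cases "length t = 0")
      case False
      then show ?thesis using h 2 unfolding is_ascent_def by (metis One_nat_def Suc_leI length_append_singleton lessI not_gr_zero)
    qed (use assms in simp)
    ultimately show "is_ascent t \<and> x \<le> asc t + 1" by simp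
  next
    assume h: "is_ascent t \<and> x \<le> asc t + 1"
    show "is_ascent (t @ [x])" unfolding is_ascent_def
    proof (intro conjI allI impI)
      show "(t @ [x]) ! 0 = 0" using h 0 unfolding is_ascent_def by simp
      fix i assume i: "1 \<le> i \<and> i < length (t @ [x])"
      show "(t @ [x]) ! i \<le> asc (take i (t @ [x])) + 1"
      proof (cases "i < length t")
        case True then show ?thesis using h 1[of i] i unfolding is_ascent_def by auto
      next
        case False then have "i = length t" using i by simp
        then show ?thesis using h 2 by simp
      qed
    qed simp
  qed
qed

lemma asc_upt: "asc [0..<k] = k - 1"
proof -
  have "{i. Suc i < length [0..<k] \<and> [0..<k] ! i < [0..<k] ! Suc i} = {..<k-1}" by auto
  thus ?thesis unfolding asc_def by simp
qed

lemma full_asc_set: assumes "asc t = length t - 1"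
  shows "{i. Suc i < length t \<and> t ! i < t ! Suc i} = {..<length t - 1}"
proof -
  have fin: "{i. Suc i < length t \<and> t ! i < t ! Suc i} \<subseteq> {..<length t - 1}" by auto
  show ?thesis
    using card_subset_eq[OF _ fin] assms unfolding asc_def by simp
qed

lemma entry_le_idx: assumes "is_ascent t" "i < length t"
  shows "t ! i \<le> i"
    using entry_le_asc[OF assms(1), of i] asc_le_len[of "take (Suc i) t"] assms(2) by simp

lemma idx_le_entry: assumes "\<And>i. Suc i < length t \<Longrightarrow> t ! i < t ! Suc i"
  shows "i < length t \<Longrightarrow> i \<le> t ! i"
  proof (induction i)
    case (Suc i) then show ?case using assms[of i] by simp
  qed simp

lemma full_asc_id:
  assumes "is_ascent t" "asc t = length t - 1"
  shows "t = [0..<length t]"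
proof -
  have inc: "t ! i < t ! Suc i" if "Suc i < length t" for i
  proof -
    have "i \<in> {..<length t - 1}" using that by simp
    then have "i \<in> {i. Suc i < length t \<and> t ! i < t ! Suc i}"
      using full_asc_set[OF assms(2)] by simp
    then show ?thesis by simp
  qed
  show ?thesis
  proof (rule nth_equalityI)
    show "length t = length [0..<length t]" by simp
    fix i assume "i < length t"
    then show "t ! i = [0..<length t] ! i"
      using idx_le_entry[OF inc, of i] entry_le_idx[OF assms(1), of i] by simp
  qed
qed

locale snocbig =
  fixes t :: "nat list" and a :: nat
  assumes ne: "t \<noteq> []" and big: "\<And>x. x \<in> set t \<Longrightarrow> x < a"
begin

lemma nth_lt: "i < length t \<Longrightarrow> t ! i < a" using big by simp

lemma rep: "st_rep (t @ [a]) = st_rep t"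
proof -
  have "a \<notin> set t" using big by auto
  moreover have "card (set t) \<le> length t" by (rule card_length)
  ultimately show ?thesis unfolding st_rep_def by simp
qed

lemma zero: assumes "a > 0" shows "st_zero (t @ [a]) = st_zero t"
proof -
  have "{i. i < length (t@[a]) \<and> (t@[a]) ! i = 0} = {i. i < length t \<and> t ! i = 0}"
    using assms by (auto simp: nth_append less_Suc_eq)
  thus ?thesis unfolding st_zero_def by simp
qed

lemma maxs: assumes "a \<noteq> length t" shows "st_max (t @ [a]) = st_max t"
proof -
  have "{i. i < length (t@[a]) \<and> (t@[a]) ! i = i} = {i. i < length t \<and> t ! i = i}"
    using assms by (auto simp: nth_append less_Suc_eq)
  thus ?thesis unfolding st_max_def by simp
qed

lemma Prm_snoc: "Prm (t @ [a]) = Prm t @ [length t]"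
proof -
  have "Prm (t @ [a]) = filter (\<lambda>i. \<forall>j. i < j \<and> j < length (t@[a]) \<longrightarrow> (t@[a]) ! i < (t@[a]) ! j) [0..<length t]
     @ filter (\<lambda>i. \<forall>j. i < j \<and> j < length (t@[a]) \<longrightarrow> (t@[a]) ! i < (t@[a]) ! j) [length t]"
    unfolding Prm_def by simp
  also have "filter (\<lambda>i. \<forall>j. i < j \<and> j < length (t@[a]) \<longrightarrow> (t@[a]) ! i < (t@[a]) ! j) [length t] = [length t]"
    by auto
  also have "filter (\<lambda>i. \<forall>j. i < j \<and> j < length (t@[a]) \<longrightarrow> (t@[a]) ! i < (t@[a]) ! j) [0..<length t]
     = filter (\<lambda>i. \<forall>j. i < j \<and> j < length t \<longrightarrow> t ! i < t ! j) [0..<length t]"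
  proof (rule filter_cong[OF refl])
    fix i assume "i \<in> set [0..<length t]"
    then have i: "i < length t" by simp
    show "(\<forall>j. i < j \<and> j < length (t@[a]) \<longrightarrow> (t@[a]) ! i < (t@[a]) ! j) =
          (\<forall>j. i < j \<and> j < length t \<longrightarrow> t ! i < t ! j)"
      using i nth_lt[OF i] by (auto simp: nth_append less_Suc_eq)
  qed
  finally show ?thesis unfolding Prm_def by simp
qed

lemma rmin: "st_rmin (t @ [a]) = st_rmin t + 1"
  unfolding st_rmin_def Prm_snoc by simp

lemma Prm_lt: "m < length (Prm t) \<Longrightarrow> Prm t ! m < length t"
proof -
  assume "m < length (Prm t)"
  then have "Prm t ! m \<in> set (Prm t)" by simp
  thus ?thesis unfolding Prm_def by simp
qed

lemma rpos_ok_eq: "rpos_ok (t @ [a]) m = rpos_ok t m"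
proof (cases "m < st_rmin t")
  case True
  have m: "m < length (Prm t)" using True st_rmin_def by simp
  have R: "Rmin (t@[a]) m = Rmin t m"
    unfolding Rmin_def Prm_snoc using m Prm_lt[OF m] by (simp add: nth_append)
  have Rl: "Rmin t m < a" unfolding Rmin_def using nth_lt Prm_lt[OF m] by simp
  have R0: "Rmin t 0 < a" unfolding Rmin_def using nth_lt Prm_lt[of 0] m by (metis length_greater_0_conv list.size(3) not_less0)
  have P: "m \<noteq> 0 \<Longrightarrow> Prm (t@[a]) ! (m-1) = Prm t ! (m-1)"
  proof -
    have "m - 1 < length (Prm t)" using m by simp
    thus ?thesis unfolding Prm_snoc by (simp add: nth_append del: One_nat_def)
  qed
  have R0': "Rmin (t@[a]) 0 = Rmin t 0"
  proof -
    have "Prm t \<noteq> []" using m by auto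
    thus ?thesis unfolding Rmin_def Prm_snoc using Prm_lt[of 0] by (simp add: nth_append)
  qed
  have S1: "{j. j < length (t@[a]) \<and> (t@[a]) ! j = Rmin t 0} = {j. j < length t \<and> t ! j = Rmin t 0}"
    using R0 by (auto simp: nth_append less_Suc_eq)
  have S2: "{j. p < j \<and> j < length (t@[a]) \<and> (t@[a]) ! j = Rmin t m} = {j. p < j \<and> j < length t \<and> t ! j = Rmin t m}" for p
    using Rl by (auto simp: nth_append less_Suc_eq)
  show ?thesis unfolding rpos_ok_def rmin using True R R0' S1 S2 P by auto
next
  case False
  show ?thesis
  proof (cases "m = st_rmin t")
    case True
    have m: "m = length (Prm t)" using True st_rmin_def by simp
    have R: "Rmin (t@[a]) m = a" unfolding Rmin_def Prm_snoc m by simp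
    have S: "card {j. p < j \<and> j < length (t@[a]) \<and> (t@[a]) ! j = a} < 2" for p
    proof -
      have "{j. p < j \<and> j < length (t@[a]) \<and> (t@[a]) ! j = a} \<subseteq> {length t}"
        using nth_lt by (auto simp: nth_append less_Suc_eq)
      from card_mono[OF _ this] show ?thesis by simp
    qed
    have S0: "card {j. j < length (t@[a]) \<and> (t@[a]) ! j = a} < 2"
    proof -
      have "{j. j < length (t@[a]) \<and> (t@[a]) ! j = a} \<subseteq> {length t}"
        using nth_lt by (auto simp: nth_append less_Suc_eq)
      from card_mono[OF _ this] show ?thesis by simp
    qed
    show ?thesis unfolding rpos_ok_def rmin using False R S S0 by (auto simp: not_le)
  next
    case F2: False
    show ?thesis unfolding rpos_ok_def rmin using False F2 by auto
  qed
qed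

lemma rpos: "st_rpos (t @ [a]) = st_rpos t"
  unfolding st_rpos_def rmin rpos_ok_eq by simp

end

lemma st_max_ne:
  assumes "t \<noteq> [0..<length t]" shows "st_max t \<noteq> length t"
proof
  assume h: "st_max t = length t"
  have sub: "{i. i < length t \<and> t ! i = i} \<subseteq> {..<length t}" by auto
  have "{i. i < length t \<and> t ! i = i} = {..<length t}"
    using card_subset_eq[OF _ sub] h unfolding st_max_def by simp
  then have "t = [0..<length t]" by (intro nth_equalityI) auto
  with assms show False by simp
qed

lemma st_max_le: "st_max t \<le> length t"
proof -
  have "st_max t \<le> card {..<length t}" unfolding st_max_def by (rule card_mono) auto
  thus ?thesis by simp
qed

lemma stats:
  assumes asc: "is_ascent t" and nid: "t \<noteq> [0..<length t]"
  defines "s \<equiv> t @ [asc t + 1]"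
  shows "asc s = asc t + 1 \<and> st_rmin s = st_rmin t + 1 \<and>
       st_rep s = st_rep t \<and> st_zero s = st_zero t \<and>
       st_max s = st_max t \<and> st_ealm s = st_ealm t \<and> st_rpos s = st_rpos t"
proof -
  have ne: "t \<noteq> []" using asc is_ascent_def by auto
  interpret snocbig t "asc t + 1"
  proof
    show "t \<noteq> []" by (rule ne)
    fix x assume "x \<in> set t"
    then have "x \<le> asc t" by (rule set_le_asc[OF asc])
    then show "x < asc t + 1" by simp
  qed
  have lt: "last t < asc t + 1" using set_le_asc[OF asc, of "last t"] ne by simp
  have a1: "asc s = asc t + 1" unfolding s_def using asc_append[OF ne] lt by simp
  have ascne: "asc t \<noteq> length t - 1" using full_asc_id[OF asc] nid by auto
  have ane: "asc t + 1 \<noteq> length t" using ascne ne by (cases t) auto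
  have mx: "st_max s = st_max t" unfolding s_def using maxs[OF ane] .
  have mne: "st_max t \<noteq> length t" using st_max_ne[OF nid] .
  have mlt: "st_max t < length t" using mne st_max_le[of t] by simp
  have ealm: "st_ealm s = st_ealm t"
    unfolding st_ealm_def mx using mlt mne unfolding s_def by (simp add: nth_append)
  show ?thesis using a1 mx ealm rmin rep zero rpos unfolding s_def by simp
qed

theorem mainTheorem10:
  fixes n :: nat
  shows "\<exists>\<phi>. bij_betw \<phi> (ascA n \<inter> ascP1) (ascA (n - 1) \<inter> ascAstar) \<and>
    (\<forall>s \<in> ascA n \<inter> ascP1.
       asc s = asc (\<phi> s) + 1 \<and> st_rmin s = st_rmin (\<phi> s) + 1 \<and>
       st_rep s = st_rep (\<phi> s) \<and> st_zero s = st_zero (\<phi> s) \<and>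
       st_max s = st_max (\<phi> s) \<and> st_ealm s = st_ealm (\<phi> s) \<and>
       st_rpos s = st_rpos (\<phi> s))"
proof -
  let ?g = "\<lambda>t. t @ [asc t + 1]"
  have inv1: "?g (butlast s) = s \<and> butlast s \<in> ascA (n - 1) \<inter> ascAstar"
    if s: "s \<in> ascA n \<inter> ascP1" for s
  proof -
    have len: "length s = n" "2 \<le> n" "is_ascent s" "s \<noteq> [0..<n]"
      and lt: "s ! (n - 2) < s ! (n - 1)" and la: "s ! (n - 1) = asc s"
      using s unfolding ascA_def ascP1_def ascAstar_def by auto
    define t where "t = butlast s"
    have sd: "s = t @ [last s]" unfolding t_def using len by (cases s rule: rev_cases) auto
    have tlen: "length t = n - 1" unfolding t_def using len by simp
    have tne: "t \<noteq> []" using tlen len by auto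
    have ls: "last s = s ! (n - 1)"
    proof -
      have "s \<noteq> []" using len by auto
      then show ?thesis using len(1) by (simp add: last_conv_nth)
    qed
    have lt': "last t = s ! (n - 2)"
    proof -
      have "n - 2 < length t" "n - 2 = length t - 1" using tlen len(2) by auto
      then show ?thesis using tne by (subst sd) (simp add: last_conv_nth nth_append)
    qed
    have lt2: "last t < last s" using lt lt' ls by simp
    have ascs: "asc s = asc t + 1"
      using asc_append[OF tne, of "last s"] lt2 sd by simp
    have las: "last s = asc t + 1" using ls la ascs by simp
    have ta: "is_ascent t" using is_ascent_snoc[OF tne, of "last s"] sd len by simp
    have tnid: "t \<noteq> [0..<length t]"
    proof
      assume h: "t = [0..<length t]"
      then have "asc t = n - 2" using asc_upt[of "length t"] tlen by simp
      then have "s = [0..<n-1] @ [n - 1]" using sd h tlen las len by simp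
      also have "... = [0..<n]" using len upt_Suc_append[of 0 "n-1"] by simp
      finally show False using len by simp
    qed
    show ?thesis using sd las ta tnid tlen
      unfolding t_def[symmetric] ascA_def ascAstar_def by simp
  qed
  have inv2: "butlast (?g t) = t \<and> ?g t \<in> ascA n \<inter> ascP1"
    if t: "t \<in> ascA (n - 1) \<inter> ascAstar" for t
  proof -
    have ta: "is_ascent t" and tlen: "length t = n - 1" and tnid: "t \<noteq> [0..<length t]"
      using t unfolding ascA_def ascAstar_def by auto
    have tne: "t \<noteq> []" using ta is_ascent_def by auto
    have "length t \<noteq> 0" using tne by simp
    then have n2: "2 \<le> n" using tlen by linarith
    have lt: "last t < asc t + 1" using set_le_asc[OF ta, of "last t"] tne by simp
    have a1: "asc (?g t) = asc t + 1" using asc_append[OF tne] lt by simp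
    have ga: "is_ascent (?g t)" using is_ascent_snoc[OF tne] ta by simp
    have gnid: "?g t \<noteq> [0..<length (?g t)]"
    proof
      assume "?g t = [0..<length (?g t)]"
      then have "take (length t) (?g t) = take (length t) [0..<length (?g t)]" by simp
      then have "t = [0..<length t]" by simp
      with tnid show False by simp
    qed
    have e1: "?g t ! (n - 2) = last t"
    proof -
      have "n - 2 < length t" "n - 2 = length t - 1" using tlen n2 by auto
      then show ?thesis using tne by (simp add: nth_append last_conv_nth)
    qed
    have e2: "?g t ! (n - 1) = asc t + 1" using tlen[symmetric] by simp
    show ?thesis using ga gnid tlen n2 e1 e2 lt a1
      unfolding ascA_def ascP1_def ascAstar_def by simp
  qed
  have bij: "bij_betw butlast (ascA n \<inter> ascP1) (ascA (n - 1) \<inter> ascAstar)"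
    by (rule bij_betw_byWitness[where f' = ?g]) (use inv1 inv2 in \<open>auto\<close>)
  have st: "asc s = asc (butlast s) + 1 \<and> st_rmin s = st_rmin (butlast s) + 1 \<and>
       st_rep s = st_rep (butlast s) \<and> st_zero s = st_zero (butlast s) \<and>
       st_max s = st_max (butlast s) \<and> st_ealm s = st_ealm (butlast s) \<and>
       st_rpos s = st_rpos (butlast s)" if s: "s \<in> ascA n \<inter> ascP1" for s
  proof -
    have "is_ascent (butlast s)" "butlast s \<noteq> [0..<length (butlast s)]"
      using inv1[OF s] unfolding ascA_def ascAstar_def by auto
    from stats[OF this] inv1[OF s] show ?thesis by simp
  qed
  show ?thesis using bij st by blast
qed

end
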